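(* Let $n\ge 3$, let $x_1,\dots,x_n$ be distinct points of $\mathbb{CP}^1$, and let $E = \mathcal{O}(1)\oplus\mathcal{O}(n-1)$ over $\mathbb{CP}^1$. Consider tuples $\mathbf{F} = \{F_1,\dots,F_n\}$ of complex lines $F_i \subset E_{x_i}$ (where $E_x$ is the fibre of $E$ at $x$) satisfying: (i) $F_i \cap \mathcal{O}(n-1)_{x_i} = 0$ for all $i$, where $\mathcal{O}(n-1)$ is the second direct summand of $E$; (ii) there is no holomorphic line subbundle $L\subset E$ of degree $1$ with $F_i \subset L_{x_i}$ for all $i$. Then such tuples exist, and any two such tuples are related by the action of a holomorphic automorphism of $E$; i.e. up to the action of $\mathrm{Aut}(E)$ there is a unique such tuple.
   Context: $\mathrm{Aut}(E)$ is the group of holomorphic vector bundle automorphisms of $E$, acting on tuples of lines in the fibres $E_{x_1},\dots,E_{x_n}$ in the obvious way. *)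

theory Defs
  imports Complex_Main
begin

text \<open>A point of CP^1 is represented by a nonzero vector z in C^2; over the representative z the
fibre of O(k) is identified with C so that a global section of O(k) is a homogeneous
polynomial of degree k in (s,t) (zero if k < 0), and the fibre of E is identified with C^2
(first coordinate: the summand O(1), second: the summand O(n-1)).\<close>

type_synonym pt = "complex \<times> complex"

definition proj_eq :: "pt \<Rightarrow> pt \<Rightarrow> bool" where
  "proj_eq z w \<longleftrightarrow> (\<exists>l::complex. l \<noteq> 0 \<and> w = (l * fst z, l * snd z))"

definition hpoly :: "int \<Rightarrow> (nat \<Rightarrow> complex) \<Rightarrow> pt \<Rightarrow> complex" where
  "hpoly k c = (\<lambda>(s,t). if k < 0 then 0 else (\<Sum>j\<le>nat k. c j * s ^ j * t ^ (nat k - j)))"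

definition is_section :: "int \<Rightarrow> (pt \<Rightarrow> complex) \<Rightarrow> bool" where
  "is_section k f \<longleftrightarrow> (\<exists>c. f = hpoly k c)"

definition dE :: "nat \<Rightarrow> nat \<Rightarrow> int" where
  "dE n i = (if i = 0 then 1 else int n - 1)"

text \<open>Holomorphic bundle endomorphisms of E: 2x2 matrices whose (i,j) entry is a section
of Hom(O(d_j), O(d_i)) = O(d_i - d_j).\<close>
definition is_endo :: "nat \<Rightarrow> (nat \<Rightarrow> nat \<Rightarrow> pt \<Rightarrow> complex) \<Rightarrow> bool" where
  "is_endo n M \<longleftrightarrow> (\<forall>i<2. \<forall>j<2. is_section (dE n i - dE n j) (M i j))"

definition app :: "(nat \<Rightarrow> nat \<Rightarrow> pt \<Rightarrow> complex) \<Rightarrow> pt \<Rightarrow> complex \<times> complex \<Rightarrow> complex \<times> complex" where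
  "app M z v = (M 0 0 z * fst v + M 0 1 z * snd v, M 1 0 z * fst v + M 1 1 z * snd v)"

definition is_aut :: "nat \<Rightarrow> (nat \<Rightarrow> nat \<Rightarrow> pt \<Rightarrow> complex) \<Rightarrow> bool" where
  "is_aut n M \<longleftrightarrow> is_endo n M \<and> (\<exists>N. is_endo n N \<and>
     (\<forall>z. z \<noteq> (0,0) \<longrightarrow> (\<forall>v. app N z (app M z v) = v \<and> app M z (app N z v) = v)))"

definition is_line :: "(complex \<times> complex) set \<Rightarrow> bool" where
  "is_line F \<longleftrightarrow> (\<exists>v. v \<noteq> (0,0) \<and> F = {(c * fst v, c * snd v) | c. True})"

text \<open>Holomorphic line subbundles of E of degree 1: images of nowhere vanishing bundle maps
O(1) \<rightarrow> E, i.e. pairs (a,b) of sections of O(d_0 - 1), O(d_1 - 1) with no common zero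
(every degree-1 line bundle on CP^1 is isomorphic to O(1)).\<close>
definition is_deg1_subbundle :: "nat \<Rightarrow> (pt \<Rightarrow> complex) \<Rightarrow> (pt \<Rightarrow> complex) \<Rightarrow> bool" where
  "is_deg1_subbundle n a b \<longleftrightarrow> is_section (dE n 0 - 1) a \<and> is_section (dE n 1 - 1) b \<and>
     (\<forall>z. z \<noteq> (0,0) \<longrightarrow> (a z, b z) \<noteq> (0,0))"

definition subbundle_fibre :: "(pt \<Rightarrow> complex) \<Rightarrow> (pt \<Rightarrow> complex) \<Rightarrow> pt \<Rightarrow> (complex \<times> complex) set" where
  "subbundle_fibre a b z = {(c * a z, c * b z) | c. True}"

definition good_tuple :: "nat \<Rightarrow> (nat \<Rightarrow> pt) \<Rightarrow> (nat \<Rightarrow> (complex \<times> complex) set) \<Rightarrow> bool" where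
  "good_tuple n x F \<longleftrightarrow>
     (\<forall>i<n. is_line (F i)) \<and>
     (\<forall>i<n. F i \<inter> {(0, w) | w. True} = {(0,0)}) \<and>
     \<not> (\<exists>a b. is_deg1_subbundle n a b \<and> (\<forall>i<n. F i \<subseteq> subbundle_fibre a b (x i)))"

end

theory Submission imports Defs "HOL-Computational_Algebra.Polynomial"
begin

lemma hpoly_nat: "hpoly (int k) c z = (\<Sum>j\<le>k. c j * fst z ^ j * snd z ^ (k - j))"
  by (cases z) (simp add: hpoly_def)

lemma sec_const: "is_section 0 (\<lambda>_. a)"
  unfolding is_section_def
  by (rule exI[of _ "\<lambda>_. a"]) (auto simp: hpoly_def)

lemma sec_zero: "is_section k (\<lambda>_. 0)"
  unfolding is_section_def
  by (rule exI[of _ "\<lambda>_. 0"]) (auto simp: hpoly_def)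

lemma sec_neg: "k < 0 \<Longrightarrow> is_section k f \<longleftrightarrow> f = (\<lambda>_. 0)"
  unfolding is_section_def hpoly_def by auto

lemma sec0_const: "is_section 0 f \<Longrightarrow> \<exists>a. f = (\<lambda>_. a)"
  unfolding is_section_def hpoly_def by auto

lemma sec_scale: "is_section k f \<Longrightarrow> is_section k (\<lambda>z. a * f z)"
  unfolding is_section_def
proof -
  assume "\<exists>c. f = hpoly k c"
  then obtain c where c: "f = hpoly k c" by blast
  show "\<exists>c. (\<lambda>z. a * f z) = hpoly k c"
    by (rule exI[of _ "\<lambda>j. a * c j"]) (auto simp: c hpoly_def sum_distrib_left mult.assoc)
qed

lemma sec_add: "is_section k f \<Longrightarrow> is_section k g \<Longrightarrow> is_section k (\<lambda>z. f z + g z)"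
  unfolding is_section_def
proof -
  assume "\<exists>c. f = hpoly k c" "\<exists>c. g = hpoly k c"
  then obtain c d where c: "f = hpoly k c" "g = hpoly k d" by blast
  show "\<exists>c. (\<lambda>z. f z + g z) = hpoly k c"
    by (rule exI[of _ "\<lambda>j. c j + d j"]) (auto simp: c hpoly_def sum.distrib distrib_right)
qed

lemma sec_sum: "finite A \<Longrightarrow> (\<And>a. a \<in> A \<Longrightarrow> is_section k (f a)) \<Longrightarrow> is_section k (\<lambda>z. \<Sum>a\<in>A. f a z)"
  by (induction A rule: finite_induct) (auto intro: sec_add sec_zero)

lemma sec_mult_t: "is_section (int k) f \<Longrightarrow> is_section (int (Suc k)) (\<lambda>z. snd z * f z)"
  unfolding is_section_def
proof -
  assume "\<exists>c. f = hpoly (int k) c"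
  then obtain c where c: "f = hpoly (int k) c" by blast
  show "\<exists>c. (\<lambda>z. snd z * f z) = hpoly (int (Suc k)) c"
  proof (rule exI[of _ "\<lambda>j. if j \<le> k then c j else 0"], rule ext)
    fix z :: pt
    have "hpoly (int (Suc k)) (\<lambda>j. if j \<le> k then c j else 0) z
       = (\<Sum>j\<le>k. c j * fst z ^ j * snd z ^ (Suc k - j))"
      unfolding hpoly_nat by simp
    also have "\<dots> = (\<Sum>j\<le>k. snd z * (c j * fst z ^ j * snd z ^ (k - j)))"
      by (rule sum.cong) (auto simp: Suc_diff_le)
    also have "\<dots> = snd z * f z" by (simp add: c hpoly_nat sum_distrib_left)
    finally show "snd z * f z = hpoly (int (Suc k)) (\<lambda>j. if j \<le> k then c j else 0) z" by simp
  qed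
qed

lemma sec_mult_s: "is_section (int k) f \<Longrightarrow> is_section (int (Suc k)) (\<lambda>z. fst z * f z)"
  unfolding is_section_def
proof -
  assume "\<exists>c. f = hpoly (int k) c"
  then obtain c where c: "f = hpoly (int k) c" by blast
  show "\<exists>c. (\<lambda>z. fst z * f z) = hpoly (int (Suc k)) c"
  proof (rule exI[of _ "\<lambda>j. if j = 0 then 0 else c (j - 1)"], rule ext)
    fix z :: pt
    have "hpoly (int (Suc k)) (\<lambda>j. if j = 0 then 0 else c (j - 1)) z
       = (\<Sum>j\<le>Suc k. (if j = 0 then 0 else c (j - 1)) * fst z ^ j * snd z ^ (Suc k - j))"
      unfolding hpoly_nat by simp
    also have "\<dots> = (\<Sum>j\<le>k. c j * fst z ^ Suc j * snd z ^ (k - j))"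
      by (subst sum.atMost_Suc_shift) simp
    also have "\<dots> = fst z * f z" by (simp add: c hpoly_nat sum_distrib_left mult_ac)
    finally show "fst z * f z = hpoly (int (Suc k)) (\<lambda>j. if j = 0 then 0 else c (j - 1)) z" by simp
  qed
qed

definition D :: "pt \<Rightarrow> pt \<Rightarrow> complex" where
  "D z w = fst z * snd w - snd z * fst w"

lemma sec_mult_D: "is_section (int k) f \<Longrightarrow> is_section (int (Suc k)) (\<lambda>z. D z w * f z)"
proof -
  assume f: "is_section (int k) f"
  have "is_section (int (Suc k)) (\<lambda>z. snd w * (fst z * f z) + (- fst w) * (snd z * f z))"
    by (intro sec_add sec_scale sec_mult_s sec_mult_t f)
  moreover have "(\<lambda>z. snd w * (fst z * f z) + (- fst w) * (snd z * f z)) = (\<lambda>z. D z w * f z)"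
    by (auto simp: D_def algebra_simps)
  ultimately show ?thesis by simp
qed

lemma sec_prod: "finite T \<Longrightarrow> is_section (int (card T)) (\<lambda>z. \<Prod>j\<in>T. D z (y j))"
proof (induction T rule: finite_induct)
  case empty then show ?case using sec_const[of 1] by simp
next
  case (insert a T)
  then show ?case using sec_mult_D[OF insert.IH, of "y a"] by simp
qed


lemma D_self: "D z z = 0" by (simp add: D_def mult.commute)

lemma D_nz:
  assumes "x \<noteq> (0,0)" "y \<noteq> (0,0)" "\<not> proj_eq x y"
  shows "D x y \<noteq> 0"
proof
  assume d: "D x y = 0"
  obtain a b where x: "x = (a,b)" by (cases x)
  obtain c e where y: "y = (c,e)" by (cases y)
  have d': "a * e = b * c" using d by (simp add: D_def x y)
  show False
  proof (cases "a = 0")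
    case True
    then have "b \<noteq> 0" using assms(1) x by auto
    then have "c = 0" using d' True by simp
    then have "e \<noteq> 0" using assms(2) y by auto
    have "proj_eq x y" unfolding proj_eq_def x y
      using True \<open>c = 0\<close> \<open>b \<noteq> 0\<close> \<open>e \<noteq> 0\<close>
      by (intro exI[of _ "e / b"]) auto
    then show False using assms(3) by simp
  next
    case False
    have "c \<noteq> 0"
    proof
      assume "c = 0" then have "e = 0" using d' False by simp
      then show False using assms(2) y \<open>c = 0\<close> by simp
    qed
    have "e = c / a * b" using d' False by (simp add: field_simps)
    then have "proj_eq x y" unfolding proj_eq_def x y
      using False \<open>c \<noteq> 0\<close> by (intro exI[of _ "c / a"]) auto
    then show False using assms(3) by simp
  qed
qed

lemma line_form:
  assumes "is_line F" "F \<inter> {(0, w) | w. True} = {(0,0)}"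
  shows "\<exists>a. F = {(c, c * a) | c. True}"
proof -
  obtain v where v: "v \<noteq> (0,0)" "F = {(c * fst v, c * snd v) | c. True}"
    using assms(1) unfolding is_line_def by blast
  have "fst v \<noteq> 0"
  proof
    assume h: "fst v = 0"
    then have "(0, snd v) \<in> F" using v(2) by (auto intro: exI[of _ 1])
    then have "(0, snd v) = (0::complex,0::complex)" using assms(2) by blast
    then show False using v(1) h by (cases v) auto
  qed
  have "F = {(c, c * (snd v / fst v)) | c. True}"
  proof (intro set_eqI iffI)
    fix p assume "p \<in> F"
    then obtain c where "p = (c * fst v, c * snd v)" using v(2) by blast
    then show "p \<in> {(c, c * (snd v / fst v)) | c. True}"
      using \<open>fst v \<noteq> 0\<close> by (intro CollectI exI[of _ "c * fst v"]) auto
  next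
    fix p assume "p \<in> {(c, c * (snd v / fst v)) | c. True}"
    then obtain c where "p = (c, c * (snd v / fst v))" by blast
    then show "p \<in> F" unfolding v(2)
      using \<open>fst v \<noteq> 0\<close> by (intro CollectI exI[of _ "c / fst v"]) auto
  qed
  then show ?thesis by blast
qed

lemma vanish:
  fixes S :: "nat set" and d :: nat
  assumes fin: "finite S" and card: "card S = Suc d"
    and t: "\<forall>k\<in>S. snd (x k) \<noteq> 0"
    and dist: "\<forall>k\<in>S. \<forall>l\<in>S. k \<noteq> l \<longrightarrow> D (x k) (x l) \<noteq> 0"
    and p: "is_section (int d) p" and z: "\<forall>k\<in>S. p (x k) = 0"
  shows "p = (\<lambda>_. 0)"
proof -
  obtain c where c: "p = hpoly (int d) c" using p unfolding is_section_def by blast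
  define q where "q = (\<Sum>j\<le>d. monom (c j) j)"
  have pq: "p (x k) = snd (x k) ^ d * poly q (fst (x k) / snd (x k))" if "snd (x k) \<noteq> 0" for k
  proof -
    have "p (x k) = (\<Sum>j\<le>d. c j * fst (x k) ^ j * snd (x k) ^ (d - j))" by (simp add: c hpoly_nat)
    also have "\<dots> = (\<Sum>j\<le>d. snd (x k) ^ d * (c j * (fst (x k) / snd (x k)) ^ j))"
    proof (rule sum.cong[OF refl])
      fix j assume "j \<in> {..d}"
      then have "snd (x k) ^ d = snd (x k) ^ j * snd (x k) ^ (d - j)"
        by (simp add: power_add[symmetric])
      then show "c j * fst (x k) ^ j * snd (x k) ^ (d - j) = snd (x k) ^ d * (c j * (fst (x k) / snd (x k)) ^ j)"
        using that by (simp add: power_divide field_simps)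
    qed
    also have "\<dots> = snd (x k) ^ d * poly q (fst (x k) / snd (x k))"
      by (simp add: q_def poly_sum poly_monom sum_distrib_left)
    finally show ?thesis .
  qed
  have "q = 0"
  proof (rule ccontr)
    assume q0: "q \<noteq> 0"
    define u where "u k = fst (x k) / snd (x k)" for k
    have "u ` S \<subseteq> {r. poly q r = 0}"
      using pq z t by (auto simp: u_def)
    moreover have "inj_on u S"
    proof
      fix k l assume kl: "k \<in> S" "l \<in> S" "u k = u l"
      show "k = l"
      proof (rule ccontr)
        assume "k \<noteq> l"
        then have "D (x k) (x l) \<noteq> 0" using dist kl by auto
        moreover have "D (x k) (x l) = 0" using kl t unfolding u_def D_def
          by (auto simp: field_simps)
        ultimately show False by simp
      qed
    qed
    ultimately have "card S \<le> card {r. poly q r = 0}"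
      using poly_roots_finite[OF q0] by (metis card_image card_mono)
    also have "\<dots> \<le> degree q" by (rule card_poly_roots_bound[OF q0])
    also have "\<dots> \<le> d" unfolding q_def
      by (rule degree_sum_le) (auto intro: order.trans[OF degree_monom_le])
    finally show False using card by simp
  qed
  have "c j = 0" if "j \<le> d" for j
  proof -
    have "coeff q j = c j" using that
      by (simp add: q_def coeff_sum coeff_monom)
    then show ?thesis using \<open>q = 0\<close> by simp
  qed
  then show ?thesis by (auto simp: c hpoly_def)
qed


theorem mainTheorem2:
  fixes n :: nat and x :: "nat \<Rightarrow> complex \<times> complex"
  assumes "n \<ge> 3"
    and "\<forall>i<n. x i \<noteq> (0,0)"
    and "\<forall>i<n. \<forall>j<n. i \<noteq> j \<longrightarrow> \<not> proj_eq (x i) (x j)"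
  shows "(\<exists>F. good_tuple n x F) \<and>
         (\<forall>F G. good_tuple n x F \<and> good_tuple n x G \<longrightarrow>
            (\<exists>M. is_aut n M \<and> (\<forall>i<n. G i = app M (x i) ` F i)))"
proof -
  have Dnz: "D (x i) (x j) \<noteq> 0" if "i < n" "j < n" "i \<noteq> j" for i j
    using D_nz assms that by blast
  obtain m where m: "m < n" "\<forall>k<n. k \<noteq> m \<longrightarrow> snd (x k) \<noteq> 0"
  proof (cases "\<exists>i<n. snd (x i) = 0")
    case True
    then obtain i where i: "i < n" "snd (x i) = 0" by blast
    have "snd (x k) \<noteq> 0" if "k < n" "k \<noteq> i" for k
    proof
      assume "snd (x k) = 0"
      then have "D (x k) (x i) = 0" using i by (simp add: D_def)
      then show False using Dnz[OF that(1) i(1) that(2)] by simp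
    qed
    then show ?thesis using that i by blast
  next
    case False
    then show ?thesis using that[of "n - 1"] assms(1) by auto
  qed
  define S where "S = {i. i < n \<and> i \<noteq> m}"
  have finS: "finite S" by (simp add: S_def)
  have cardS: "card S = Suc (n - 2)"
  proof -
    have "S = {..<n} - {m}" by (auto simp: S_def)
    then show ?thesis using m(1) assms(1) by simp
  qed
  have degE: "dE n 1 - dE n 0 = int (n - 2)" "dE n 1 - 1 = int (n - 2)" "dE n 0 - 1 = 0"
    "dE n 0 - dE n 1 < 0" using assms(1) by (auto simp: dE_def)
  define L where "L k z = (1 / (\<Prod>j\<in>S-{k}. D (x k) (x j))) * (\<Prod>j\<in>S-{k}. D z (x j))" for k z
  have secL: "is_section (int (n-2)) (L k)" if "k \<in> S" for k
  proof -
    have "card (S - {k}) = n - 2" using that cardS finS by simp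
    then have "is_section (int (n-2)) (\<lambda>z. (1 / (\<Prod>j\<in>S-{k}. D (x k) (x j))) * (\<Prod>j\<in>S-{k}. D z (x j)))"
      using sec_scale[OF sec_prod[of "S - {k}" x]] finS by (metis finite_Diff)
    then show ?thesis unfolding L_def[abs_def] .
  qed
  have Lval: "L k (x i) = (if i = k then 1 else 0)" if "k \<in> S" "i \<in> S" for k i
  proof (cases "i = k")
    case True
    have "(\<Prod>j\<in>S-{k}. D (x k) (x j)) \<noteq> 0"
      using finS Dnz that by (auto simp: S_def)
    then show ?thesis using True by (simp add: L_def)
  next
    case False
    then have "(\<Prod>j\<in>S-{k}. D (x i) (x j)) = 0"
      using finS that by (auto intro!: bexI[of _ i] simp: D_self)
    then show ?thesis using False by (simp add: L_def)
  qed
  define P where "P f z = (\<Sum>k\<in>S. f k * L k z)" for f z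
  have secP: "is_section (int (n-2)) (P f)" for f
    unfolding P_def[abs_def] using finS secL by (intro sec_sum sec_scale) auto
  have Pval: "P f (x i) = f i" if "i \<in> S" for f i
  proof -
    have "P f (x i) = (\<Sum>k\<in>S. if k = i then f k else 0)"
      unfolding P_def using that Lval by (intro sum.cong) auto
    then show ?thesis using finS that by simp
  qed
  define rr where "rr f = f m - P f (x m)" for f
  have interp: "\<forall>i<n. P f (x i) = f i" if "rr f = 0" for f
    using that Pval unfolding rr_def S_def by (metis (mono_tags, lifting) eq_iff_diff_eq_0 mem_Collect_eq)
  have tS: "\<forall>k\<in>S. snd (x k) \<noteq> 0" using m by (auto simp: S_def)
  have distS: "\<forall>k\<in>S. \<forall>l\<in>S. k \<noteq> l \<longrightarrow> D (x k) (x l) \<noteq> 0" using Dnz by (auto simp: S_def)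
  define lineF where "lineF f i = {(c, c * f i) | c. True}" for f :: "nat \<Rightarrow> complex" and i
  have good_rr: "\<exists>f. (\<forall>i<n. F i = lineF f i) \<and> rr f \<noteq> 0" if g: "good_tuple n x F" for F
  proof -
    have "\<forall>i<n. \<exists>a. F i = {(c, c * a) | c. True}"
      using g line_form unfolding good_tuple_def by blast
    then obtain f where f: "\<forall>i<n. F i = lineF f i" unfolding lineF_def by metis
    have "rr f \<noteq> 0"
    proof
      assume "rr f = 0"
      then have ip: "\<forall>i<n. P f (x i) = f i" by (rule interp)
      have "is_deg1_subbundle n (\<lambda>_. 1) (P f)"
        unfolding is_deg1_subbundle_def degE using secP sec_const by auto
      moreover have "\<forall>i<n. F i \<subseteq> subbundle_fibre (\<lambda>_. 1) (P f) (x i)"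
        using f ip by (auto simp: lineF_def subbundle_fibre_def)
      ultimately show False using g unfolding good_tuple_def by blast
    qed
    then show ?thesis using f by blast
  qed
  have ex: "\<exists>F. good_tuple n x F"
  proof
    define e where "e i = (if i = m then 1 else 0 :: complex)" for i
    show "good_tuple n x (lineF e)"
      unfolding good_tuple_def
    proof (intro conjI allI impI notI)
      fix i assume "i < n"
      show "is_line (lineF e i)" unfolding is_line_def lineF_def
        by (intro exI[of _ "(1, e i)"]) auto
      show "lineF e i \<inter> {(0, w) |w. True} = {(0, 0)}"
        unfolding lineF_def by auto
    next
      assume "\<exists>a b. is_deg1_subbundle n a b \<and> (\<forall>i<n. lineF e i \<subseteq> subbundle_fibre a b (x i))"
      then obtain a b where ab: "is_deg1_subbundle n a b" "\<forall>i<n. lineF e i \<subseteq> subbundle_fibre a b (x i)"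
        by blast
      obtain a0 where a0: "a = (\<lambda>_. a0)" using ab(1) sec0_const unfolding is_deg1_subbundle_def degE by blast
      have secb: "is_section (int (n-2)) b" using ab(1) unfolding is_deg1_subbundle_def degE by blast
      have key: "a0 \<noteq> 0 \<and> e i = b (x i) / a0" if iN: "i < n" for i
      proof -
        have "(1, 1 * e i) \<in> lineF e i" unfolding lineF_def by blast
        then have "(1, 1 * e i) \<in> subbundle_fibre a b (x i)" using ab(2) iN by blast
        then obtain c where "1 = c * a0" "e i = c * b (x i)"
          unfolding subbundle_fibre_def a0 by auto
        moreover from this(1) have "a0 \<noteq> 0" by auto
        moreover from calculation have "c = 1 / a0" by (simp add: field_simps)
        ultimately show ?thesis by simp
      qed
      define p where "p z = (1 / a0) * b z" for z
      have "is_section (int (n-2)) p" unfolding p_def[abs_def] by (rule sec_scale[OF secb])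
      moreover have "\<forall>k\<in>S. p (x k) = 0" unfolding p_def S_def
        by (metis (mono_tags, lifting) e_def key mem_Collect_eq mult_eq_0_iff times_divide_eq_left divide_eq_0_iff)
      ultimately have "p = (\<lambda>_. 0)" using vanish[OF finS cardS tS distS] by blast
      moreover have "p (x m) = 1" using key[OF m(1)] unfolding p_def e_def by simp
      ultimately show False by simp
    qed
  qed
  have uniq: "\<exists>M. is_aut n M \<and> (\<forall>i<n. G i = app M (x i) ` F i)"
    if gF: "good_tuple n x F" and gG: "good_tuple n x G" for F G
  proof -
    obtain f where f: "\<forall>i<n. F i = lineF f i" "rr f \<noteq> 0" using good_rr[OF gF] by blast
    obtain g where g: "\<forall>i<n. G i = lineF g i" "rr g \<noteq> 0" using good_rr[OF gG] by blast
    define \<beta> where "\<beta> = rr g / rr f"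
    have b0: "\<beta> \<noteq> 0" using f g by (simp add: \<beta>_def)
    define h where "h i = g i - \<beta> * f i" for i
    have Ph: "P h z = P g z - \<beta> * P f z" for z
      by (simp add: P_def h_def sum_subtractf sum_distrib_left algebra_simps)
    have "rr h = rr g - \<beta> * rr f" by (simp add: rr_def Ph h_def algebra_simps)
    then have "rr h = 0" using f(2) by (simp add: \<beta>_def)
    then have ip: "\<forall>i<n. P h (x i) = h i" by (rule interp)
    define q where "q = P h"
    define M :: "nat \<Rightarrow> nat \<Rightarrow> pt \<Rightarrow> complex" where "M = (\<lambda>i j z. if i = 0 \<and> j = 0 then 1 else if i = 0 then 0
                          else if j = 0 then q z else \<beta>)"
    define N :: "nat \<Rightarrow> nat \<Rightarrow> pt \<Rightarrow> complex" where "N = (\<lambda>i j z. if i = 0 \<and> j = 0 then 1 else if i = 0 then 0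
                          else if j = 0 then (- 1 / \<beta>) * q z else 1 / \<beta>)"
    have secq: "is_section (int (n-2)) q" unfolding q_def by (rule secP)
    have sc2: "is_section (dE n 1 - dE n 0) (\<lambda>z. (- 1 / \<beta>) * q z)"
      unfolding degE by (rule sec_scale[OF secq])
    have endo0: "is_section (dE n i - dE n j) (M i j) \<and> is_section (dE n i - dE n j) (N i j)"
      if ij: "i < 2" "j < 2" for i j
    proof -
      have "i = 0 \<or> i = 1" "j = 0 \<or> j = 1" using ij by auto
      then show ?thesis
        unfolding M_def N_def using sec_const degE(4) secq sec_neg sc2
        by (auto simp: degE(1)[symmetric] simp del: of_nat_diff)
    qed
    have endo: "is_endo n M" "is_endo n N"
      unfolding is_endo_def using endo0 by blast+
    have "is_aut n M" unfolding is_aut_def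
      using endo b0 by (intro conjI exI[of _ N]) (auto simp: app_def M_def N_def field_simps)
    moreover have "G i = app M (x i) ` F i" if "i < n" for i
    proof -
      have hi: "P h (x i) = g i - \<beta> * f i" using ip that by (simp add: h_def)
      have "app M (x i) (c, c * f i) = (c, c * g i)" for c
        unfolding app_def M_def q_def fst_conv snd_conv hi by (simp add: algebra_simps)
      then show ?thesis using f(1) g(1) that unfolding lineF_def by (auto simp: image_iff)
    qed
    ultimately show ?thesis by blast
  qed
  show ?thesis using ex uniq by blast
qed

end
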